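(* For every level $t \in \mathcal{L}$ there exist finitely many levels $u_1, \ldots, u_n$, each generated by the grammar $u ::= s^k(x) \mid s^k(0) \mid \operatorname{imax}(u, x)$ (with $k \in \mathbb{N}$ and $x \in \mathcal{X}$), such that $t =_{\mathcal{L}} \max(u_1, \ldots, u_n)$.
   Context: $\operatorname{imax}\colon \mathbb{N}\times\mathbb{N}\to\mathbb{N}$ is defined by $\operatorname{imax}(i,0)=0$ and $\operatorname{imax}(i,j+1)=\max(i,j+1)$. Levels are the terms of the grammar $t ::= x \mid 0 \mid s(t) \mid \max(t,t) \mid \operatorname{imax}(t,t)$, where $x$ ranges over a countable set of variables $\mathcal{X}$; $\mathcal{L}$ denotes the set of levels; $s^k$ denotes $k$ applications of $s$. A valuation is a function $\sigma\colon\mathcal{X}\to\mathbb{N}$; the value $[t]_\sigma$ is defined by $[0]_\sigma=0$, $[x]_\sigma=\sigma(x)$, $[s(t)]_\sigma=[t]_\sigma+1$, $[\max(t_1,t_2)]_\sigma=\max([t_1]_\sigma,[t_2]_\sigma)$, $[\operatorname{imax}(t_1,t_2)]_\sigma=\operatorname{imax}([t_1]_\sigma,[t_2]_\sigma)$. $t_1 =_{\mathcal{L}} t_2$ means $[t_1]_\sigma=[t_2]_\sigma$ for every valuation $\sigma$. *)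

theory Defs
  imports Main
begin

definition imax :: "nat \<Rightarrow> nat \<Rightarrow> nat" where
  "imax i j = (if j = 0 then 0 else max i j)"

datatype level = Var nat | Zero | Succ level | Max level level | IMax level level

fun eval :: "(nat \<Rightarrow> nat) \<Rightarrow> level \<Rightarrow> nat" where
  "eval \<sigma> Zero = 0"
| "eval \<sigma> (Var x) = \<sigma> x"
| "eval \<sigma> (Succ t) = Suc (eval \<sigma> t)"
| "eval \<sigma> (Max t1 t2) = max (eval \<sigma> t1) (eval \<sigma> t2)"
| "eval \<sigma> (IMax t1 t2) = imax (eval \<sigma> t1) (eval \<sigma> t2)"

definition level_eq :: "level \<Rightarrow> level \<Rightarrow> bool" where
  "level_eq t1 t2 \<longleftrightarrow> (\<forall>\<sigma>. eval \<sigma> t1 = eval \<sigma> t2)"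

definition succs :: "nat \<Rightarrow> level \<Rightarrow> level" where
  "succs k t = (Succ ^^ k) t"

inductive normal_u :: "level \<Rightarrow> bool" where
  nu_var: "normal_u (succs k (Var x))"
| nu_zero: "normal_u (succs k Zero)"
| nu_imax: "normal_u u \<Longrightarrow> normal_u (IMax u (Var x))"

fun max_list :: "level list \<Rightarrow> level" where
  "max_list [] = Zero"
| "max_list [u] = u"
| "max_list (u # v # us) = Max u (max_list (v # us))"

end

theory Submission
  imports Defs
begin

definition mx :: "(nat \<Rightarrow> nat) \<Rightarrow> level list \<Rightarrow> nat" where
  "mx \<sigma> us = foldr (\<lambda>u m. max (eval \<sigma> u) m) us 0"

lemma mx_simps[simp]: "mx \<sigma> [] = 0" "mx \<sigma> (u # us) = max (eval \<sigma> u) (mx \<sigma> us)"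
  by (simp_all add: mx_def)

lemma mx_append[simp]: "mx \<sigma> (xs @ ys) = max (mx \<sigma> xs) (mx \<sigma> ys)"
  by (induction xs) auto

lemma eval_max_list: "us \<noteq> [] \<Longrightarrow> eval \<sigma> (max_list us) = mx \<sigma> us"
  by (induction us rule: max_list.induct) auto

lemma mx_concat_map:
  assumes "L \<noteq> []" "\<forall>u\<in>set L. mx \<sigma> (f u) = h (eval \<sigma> u)"
    "\<forall>a b. h (max a b) = max (h a) (h b)"
  shows "mx \<sigma> (concat (map f L)) = h (mx \<sigma> L)"
  using assms
proof (induction L)
  case Nil then show ?case by simp
next
  case (Cons u L)
  show ?case
  proof (cases "L = []")
    case True then show ?thesis using Cons by simp
  next
    case False then show ?thesis using Cons by simp
  qed
qed

fun succ_n :: "level \<Rightarrow> level list" where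
  "succ_n (IMax u (Var x)) = Succ Zero # Succ (Var x) # map (\<lambda>v. IMax v (Var x)) (succ_n u)"
| "succ_n u = [Succ u]"

fun imax_n :: "level \<Rightarrow> level \<Rightarrow> level list" where
  "imax_n u (Var y) = [IMax u (Var y)]"
| "imax_n u Zero = [Zero]"
| "imax_n u (Succ w) = [u, Succ w]"
| "imax_n u (IMax w (Var y)) = [IMax u (Var y), IMax w (Var y)]"
| "imax_n u _ = [u]"

fun norm :: "level \<Rightarrow> level list" where
  "norm (Var x) = [Var x]"
| "norm Zero = [Zero]"
| "norm (Succ t) = concat (map succ_n (norm t))"
| "norm (Max a b) = norm a @ norm b"
| "norm (IMax a b) = concat (map (\<lambda>u. concat (map (imax_n u) (norm b))) (norm a))"

lemma succs_Suc: "succs (Suc k) t = Succ (succs k t)"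
  by (simp add: succs_def)

lemma normal_Var: "normal_u (Var x)"
  using nu_var[of 0 x] by (simp add: succs_def)
lemma normal_Zero: "normal_u Zero"
  using nu_zero[of 0] by (simp add: succs_def)

lemma normal_cases:
  assumes "normal_u u"
  shows "(\<exists>k x. u = succs k (Var x)) \<or> (\<exists>k. u = succs k Zero) \<or> (\<exists>w x. u = IMax w (Var x) \<and> normal_u w)"
  using assms by cases auto

lemma normal_Succ: "normal_u (Succ u) \<Longrightarrow> normal_u (Succ (Succ u))"
proof -
  assume "normal_u (Succ u)"
  then have "(\<exists>k x. Succ u = succs k (Var x)) \<or> (\<exists>k. Succ u = succs k Zero)"
    using normal_cases by blast
  then show ?thesis
    by (metis nu_var nu_zero succs_Suc)
qed

lemma succ_ne: "succ_n u \<noteq> []"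
  by (cases u rule: succ_n.cases) auto

lemma mx_map_imax: "L \<noteq> [] \<Longrightarrow> mx \<sigma> (map (\<lambda>v. IMax v (Var x)) L) = imax (mx \<sigma> L) (\<sigma> x)"
proof (induction L)
  case Nil then show ?case by simp
next
  case (Cons a L) then show ?case by (cases "L = []") (auto simp: imax_def)
qed

lemma succ_n_correct:
  "normal_u u \<Longrightarrow> mx \<sigma> (succ_n u) = Suc (eval \<sigma> u) \<and> (\<forall>v\<in>set (succ_n u). normal_u v)"
proof (induction rule: normal_u.induct)
  case (nu_var k x)
  have "succ_n (succs k (Var x)) = [Succ (succs k (Var x))]"
    by (cases k) (simp_all add: succs_def)
  moreover have "normal_u (Succ (succs k (Var x)))"
    using normal_u.nu_var[of "Suc k" x] by (simp add: succs_Suc)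
  ultimately show ?case by simp
next
  case (nu_zero k)
  have "succ_n (succs k Zero) = [Succ (succs k Zero)]"
    by (cases k) (simp_all add: succs_def)
  moreover have "normal_u (Succ (succs k Zero))"
    using normal_u.nu_zero[of "Suc k"] by (simp add: succs_Suc)
  ultimately show ?case by simp
next
  case (nu_imax u x)
  have s1: "normal_u (Succ Zero)" using nu_zero[of 1] by (simp add: succs_def)
  have s2: "normal_u (Succ (Var x))" using nu_var[of 1] by (simp add: succs_def)
  show ?case using nu_imax succ_ne[of u] s1 s2
    by (auto simp: mx_map_imax imax_def intro: normal_u.nu_imax)
qed

lemma imax_n_correct:
  assumes "normal_u u" "normal_u v"
  shows "mx \<sigma> (imax_n u v) = imax (eval \<sigma> u) (eval \<sigma> v) \<and> (\<forall>w\<in>set (imax_n u v). normal_u w)"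
  using normal_cases[OF assms(2)]
proof (elim disjE exE conjE)
  fix k x assume v: "v = succs k (Var x)"
  show ?thesis
  proof (cases k)
    case 0 then show ?thesis using v assms by (auto simp: succs_def imax_def intro: nu_imax)
  next
    case (Suc j) then show ?thesis using v assms by (auto simp: succs_Suc imax_def)
  qed
next
  fix k assume v: "v = succs k Zero"
  show ?thesis
  proof (cases k)
    case 0 then show ?thesis using v assms by (auto simp: succs_def imax_def normal_Zero)
  next
    case (Suc j) then show ?thesis using v assms by (auto simp: succs_Suc imax_def)
  qed
next
  fix w x assume v: "v = IMax w (Var x)" and w: "normal_u w"
  then show ?thesis using assms by (auto simp: imax_def intro: nu_imax)
qed

lemma norm_correct: "norm t \<noteq> [] \<and> (\<forall>u\<in>set (norm t). normal_u u) \<and> mx \<sigma> (norm t) = eval \<sigma> t"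
proof (induction t)
  case (Var x) then show ?case by (simp add: normal_Var)
next
  case Zero then show ?case by (simp add: normal_Zero)
next
  case (Succ t)
  have ne: "norm t \<noteq> []" and nrm: "\<forall>u\<in>set (norm t). normal_u u"
    and ev: "mx \<sigma> (norm t) = eval \<sigma> t" using Succ.IH by blast+
  have h: "\<forall>u\<in>set (norm t). mx \<sigma> (succ_n u) = Suc (eval \<sigma> u)"
    using nrm succ_n_correct by blast
  have "mx \<sigma> (concat (map succ_n (norm t))) = Suc (mx \<sigma> (norm t))"
    by (rule mx_concat_map[OF ne h]) simp
  moreover have "concat (map succ_n (norm t)) \<noteq> []"
  proof -
    obtain u where u: "u \<in> set (norm t)" using ne by (cases "norm t") auto
    show ?thesis using u succ_ne[of u] by auto
  qed
  moreover have "\<forall>w\<in>set (concat (map succ_n (norm t))). normal_u w"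
  proof
    fix w assume "w \<in> set (concat (map succ_n (norm t)))"
    then obtain u where u: "u \<in> set (norm t)" and w: "w \<in> set (succ_n u)" by auto
    have "normal_u u" using u nrm by blast
    then show "normal_u w" using succ_n_correct w by blast
  qed
  ultimately show ?case using ev by simp
next
  case (Max a b) then show ?case by auto
next
  case (IMax a b)
  have nea: "norm a \<noteq> []" and nrma: "\<forall>u\<in>set (norm a). normal_u u"
    and eva: "mx \<sigma> (norm a) = eval \<sigma> a" using IMax.IH(1) by blast+
  have neb: "norm b \<noteq> []" and nrmb: "\<forall>u\<in>set (norm b). normal_u u"
    and evb: "mx \<sigma> (norm b) = eval \<sigma> b" using IMax.IH(2) by blast+
  have inner: "mx \<sigma> (concat (map (imax_n u) (norm b))) = imax (eval \<sigma> u) (mx \<sigma> (norm b))"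
    if nu: "normal_u u" for u
  proof (rule mx_concat_map[OF neb])
    show "\<forall>v\<in>set (norm b). mx \<sigma> (imax_n u v) = imax (eval \<sigma> u) (eval \<sigma> v)"
      using nrmb imax_n_correct nu by blast
    show "\<forall>x y. imax (eval \<sigma> u) (max x y) = max (imax (eval \<sigma> u) x) (imax (eval \<sigma> u) y)"
      by (auto simp: imax_def max_def)
  qed
  have "mx \<sigma> (concat (map (\<lambda>u. concat (map (imax_n u) (norm b))) (norm a)))
        = imax (mx \<sigma> (norm a)) (mx \<sigma> (norm b))"
  proof (rule mx_concat_map[OF nea])
    show "\<forall>u\<in>set (norm a). mx \<sigma> (concat (map (imax_n u) (norm b))) = imax (eval \<sigma> u) (mx \<sigma> (norm b))"
      using nrma inner by blast
    show "\<forall>x y. imax (max x y) (mx \<sigma> (norm b)) = max (imax x (mx \<sigma> (norm b))) (imax y (mx \<sigma> (norm b)))"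
      by (auto simp: imax_def max_def)
  qed
  moreover have "norm (IMax a b) \<noteq> []"
  proof -
    obtain u where u: "u \<in> set (norm a)" using nea by (cases "norm a") auto
    obtain v where v: "v \<in> set (norm b)" using neb by (cases "norm b") auto
    have "imax_n u v \<noteq> []" by (cases "(u, v)" rule: imax_n.cases) auto
    then show ?thesis using u v by auto
  qed
  moreover have "\<forall>w\<in>set (norm (IMax a b)). normal_u w"
  proof
    fix w assume "w \<in> set (norm (IMax a b))"
    then obtain u v where u: "u \<in> set (norm a)" and v: "v \<in> set (norm b)" and w: "w \<in> set (imax_n u v)"
      by auto
    have "normal_u u" "normal_u v" using u v nrma nrmb by blast+
    then show "normal_u w" using imax_n_correct w by blast
  qed
  ultimately show ?case using eva evb by simp
qed

theorem theorem18:
  fixes t :: level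
  shows "\<exists>us. us \<noteq> [] \<and> (\<forall>u\<in>set us. normal_u u) \<and> level_eq t (max_list us)"
proof (intro exI conjI)
  show "norm t \<noteq> []" "\<forall>u\<in>set (norm t). normal_u u" using norm_correct by blast+
  show "level_eq t (max_list (norm t))"
    unfolding level_eq_def
  proof
    fix \<sigma>
    have "norm t \<noteq> []" using norm_correct by blast
    then show "eval \<sigma> t = eval \<sigma> (max_list (norm t))"
      using norm_correct[of t \<sigma>] eval_max_list[of "norm t" \<sigma>] by simp
  qed
qed

end
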